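(* Let $G=(V,E)$ be a finite, connected, undirected graph with $n\ge2$ vertices and let $0<r<1$. Then the absorption time $\tau$ of the Moran process on $G$ with fitness $r$ (started from a single mutant at any vertex) satisfies $\mathbb{E}[\tau]\le\frac{1}{1-r}n^3$.
   Context: The Moran process on $G$ with mutant fitness $r>0$ is the Markov chain $(X_i)_{i\ge0}$ whose state $X_i\subseteq V$ is the set of vertices occupied by mutants; every other vertex is occupied by a non-mutant of fitness $1$. Write $W(S)=r|S|+|V\setminus S|$ for the total fitness. Given $X_i=S$, one step is: choose a vertex $x$ with probability $r/W(S)$ if $x\in S$ and $1/W(S)$ if $x\notin S$; then choose a neighbour $y$ of $x$ uniformly at random; set $X_{i+1}=S\cup\{y\}$ if $x\in S$ and $X_{i+1}=S\setminus\{y\}$ if $x\notin S$. The process starts from $X_0=\{x\}$ for a single vertex $x$. The absorption time is $\tau=\min\{i: X_i=\emptyset\text{ or }X_i=V\}$. *)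

theory Defs
  imports "HOL-Probability.Probability"
begin

definition connected_graph :: "'a set \<Rightarrow> ('a \<Rightarrow> 'a \<Rightarrow> bool) \<Rightarrow> bool" where
  "connected_graph V E \<longleftrightarrow> finite V \<and>
     (\<forall>u v. E u v \<longrightarrow> u \<in> V \<and> v \<in> V) \<and>
     (\<forall>u v. E u v \<longrightarrow> E v u) \<and>
     (\<forall>u. \<not> E u u) \<and>
     (\<forall>u\<in>V. \<forall>v\<in>V. E\<^sup>*\<^sup>* u v)"

definition moran_W :: "'a set \<Rightarrow> real \<Rightarrow> 'a set \<Rightarrow> real" where
  "moran_W V r S = r * real (card S) + real (card (V - S))"

definition moran_step :: "'a set \<Rightarrow> ('a \<Rightarrow> 'a \<Rightarrow> bool) \<Rightarrow> real \<Rightarrow> 'a set \<Rightarrow> 'a set pmf" where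
  "moran_step V E r S =
     bind_pmf
       (embed_pmf (\<lambda>x. if x \<in> V then (if x \<in> S then r else 1) / moran_W V r S else 0))
       (\<lambda>x. map_pmf (\<lambda>y. if x \<in> S then insert y S else S - {y}) (pmf_of_set {y. E x y}))"

definition moran_dist :: "'a set \<Rightarrow> ('a \<Rightarrow> 'a \<Rightarrow> bool) \<Rightarrow> real \<Rightarrow> 'a \<Rightarrow> nat \<Rightarrow> 'a set pmf" where
  "moran_dist V E r x0 i = ((\<lambda>p. bind_pmf p (moran_step V E r)) ^^ i) (return_pmf {x0})"

text \<open>Expected absorption time E[tau] = sum_{i>=0} P(tau > i). Since the states {} and V
  are absorbing, tau > i iff X_i is neither {} nor V.\<close>
definition moran_expected_absorption_time ::
  "'a set \<Rightarrow> ('a \<Rightarrow> 'a \<Rightarrow> bool) \<Rightarrow> real \<Rightarrow> 'a \<Rightarrow> ennreal" where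
  "moran_expected_absorption_time V E r x0 =
     (\<Sum>i. ennreal (measure_pmf.prob (moran_dist V E r x0 i) {S. S \<noteq> {} \<and> S \<noteq> V}))"

end

theory Submission
  imports Defs
begin

lemma exp_bind_finite:
  fixes f :: "'b \<Rightarrow> real"
  assumes A: "finite A" "set_pmf M \<subseteq> A" and B: "finite B"
    and NB: "\<And>x. x \<in> A \<Longrightarrow> set_pmf (N x) \<subseteq> B"
  shows "measure_pmf.expectation (bind_pmf M N) f =
         measure_pmf.expectation M (\<lambda>x. measure_pmf.expectation (N x) f)"
proof -
  have sb: "set_pmf (bind_pmf M N) \<subseteq> B" using A NB by auto
  have "measure_pmf.expectation (bind_pmf M N) f = (\<Sum>y\<in>B. f y * pmf (bind_pmf M N) y)"
    using sb B by (intro integral_measure_pmf_real) auto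
  also have "\<dots> = (\<Sum>y\<in>B. f y * (\<Sum>x\<in>A. pmf (N x) y * pmf M x))"
  proof (rule sum.cong[OF refl])
    fix y assume "y \<in> B"
    have "pmf (bind_pmf M N) y = (\<integral>x. pmf (N x) y \<partial>measure_pmf M)" by (rule pmf_bind)
    also have "\<dots> = (\<Sum>x\<in>A. pmf (N x) y * pmf M x)"
      using A by (intro integral_measure_pmf_real) auto
    finally show "f y * pmf (bind_pmf M N) y = f y * (\<Sum>x\<in>A. pmf (N x) y * pmf M x)" by simp
  qed
  also have "\<dots> = (\<Sum>x\<in>A. (\<Sum>y\<in>B. f y * pmf (N x) y) * pmf M x)"
    by (simp add: sum_distrib_left sum_distrib_right mult.assoc sum.swap[of _ B A])
  also have "\<dots> = (\<Sum>x\<in>A. measure_pmf.expectation (N x) f * pmf M x)"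
  proof (rule sum.cong[OF refl])
    fix x assume "x \<in> A"
    have "measure_pmf.expectation (N x) f = (\<Sum>y\<in>B. f y * pmf (N x) y)"
      using NB[OF \<open>x \<in> A\<close>] B by (intro integral_measure_pmf_real) auto
    then show "(\<Sum>y\<in>B. f y * pmf (N x) y) * pmf M x = measure_pmf.expectation (N x) f * pmf M x"
      by simp
  qed
  also have "\<dots> = measure_pmf.expectation M (\<lambda>x. measure_pmf.expectation (N x) f)"
    using A by (intro integral_measure_pmf_real[symmetric]) auto
  finally show ?thesis .
qed

locale moran_graph =
  fixes V :: "'a set" and E :: "'a \<Rightarrow> 'a \<Rightarrow> bool" and r :: real
  assumes cg: "connected_graph V E" and n2: "card V \<ge> 2" and r0: "0 < r" and r1: "r < 1"
begin

definition N where "N x = {y. E x y}"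
definition d where "d x = real (card (N x))"
definition phi where "phi S = (\<Sum>x\<in>S \<inter> V. 1 / d x)"

lemma finV: "finite V" using cg by (simp add: connected_graph_def)
lemma Ein: "E u v \<Longrightarrow> u \<in> V \<and> v \<in> V" using cg by (simp add: connected_graph_def)
lemma Esym: "E u v \<Longrightarrow> E v u" using cg unfolding connected_graph_def by blast
lemma Eirr: "\<not> E u u" using cg by (simp add: connected_graph_def)
lemma Econn: "u \<in> V \<Longrightarrow> v \<in> V \<Longrightarrow> E\<^sup>*\<^sup>* u v" using cg by (simp add: connected_graph_def)

lemma NV: "N x \<subseteq> V" using Ein by (auto simp: N_def)
lemma finN: "finite (N x)" using NV finV finite_subset by blast

lemma Nne: assumes "x \<in> V" shows "N x \<noteq> {}"
proof -
  have "\<exists>v\<in>V. v \<noteq> x"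
  proof (rule ccontr)
    assume "\<not> ?thesis" then have "V \<subseteq> {x}" by auto
    then have "card V \<le> 1" using card_mono[of "{x}" V] by (simp add: card_mono)
    with n2 show False by simp
  qed
  then obtain v where v: "v \<in> V" "v \<noteq> x" by blast
  have "E\<^sup>*\<^sup>* x v" using Econn assms v by blast
  then show ?thesis using v(2) by (cases rule: converse_rtranclpE) (auto simp: N_def)
qed

lemma d_ge1: "x \<in> V \<Longrightarrow> d x \<ge> 1"
  using Nne finN by (simp add: d_def Suc_le_eq card_gt_0_iff)

lemma d_le: "d x \<le> real (card V)"
  using NV finV by (simp add: d_def card_mono)

lemma phi_nonneg: "phi S \<ge> 0"
  unfolding phi_def by (intro sum_nonneg) (simp add: d_def)

lemma d_pos: "x \<in> V \<Longrightarrow> d x > 0" using d_ge1[of x] by simp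

definition w where "w S x = (if x \<in> V then (if x \<in> S then r else 1) / moran_W V r S else 0)"
definition h where "h S x y = (if x \<in> S then insert y S else S - {y})"
definition delta where "delta S x y = (if x \<in> S then (if y \<in> S then 0 else 1 / d y)
   else (if y \<in> S then - (1 / d y) else 0))"
definition c where "c S x y = 1 / (moran_W V r S * d x * d y)"
definition Bs where "Bs S = (\<Sum>x\<in>V. \<Sum>y\<in>V. if E x y \<and> x \<in> S \<and> y \<notin> S then c S x y else 0)"

lemma step_eq: "moran_step V E r S = bind_pmf (embed_pmf (w S)) (\<lambda>x. map_pmf (h S x) (pmf_of_set (N x)))"
  unfolding moran_step_def w_def h_def N_def ..

lemma card_split: "S \<subseteq> V \<Longrightarrow> real (card (V - S)) = real (card V) - real (card S)"
  using finV by (simp add: card_Diff_subset finite_subset card_mono of_nat_diff)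

lemma W_bounds: assumes "S \<subseteq> V" shows "moran_W V r S \<ge> r * real (card V)" "moran_W V r S \<le> real (card V)"
proof -
  have "card S \<le> card V" using assms finV by (simp add: card_mono)
  have c: "r * real (card (V-S)) \<le> real (card (V-S))"
    using r0 r1 by (intro mult_left_le_one_le) auto
  have s: "r * real (card S) \<le> real (card S)"
    using r0 r1 by (intro mult_left_le_one_le) auto
  have e: "r * real (card V) = r * real (card S) + r * real (card (V-S))"
  proof -
    have "real (card V) = real (card S) + real (card (V-S))" using card_split[OF assms] by simp
    then show ?thesis by (simp add: distrib_left)
  qed
  show "moran_W V r S \<ge> r * real (card V)" "moran_W V r S \<le> real (card V)"
    using c s e card_split[OF assms] unfolding moran_W_def by linarith+
qed

lemma W_pos: assumes "S \<subseteq> V" shows "moran_W V r S > 0"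
proof -
  have "r * real (card V) > 0" using r0 n2 by simp
  then show ?thesis using W_bounds[OF assms] by linarith
qed

lemma w_nonneg: "S \<subseteq> V \<Longrightarrow> w S x \<ge> 0"
  using W_pos[of S] r0 by (simp add: w_def)

lemma w_sum: assumes "S \<subseteq> V" shows "(\<Sum>x\<in>V. w S x) = 1"
proof -
  have "(\<Sum>x\<in>V. w S x) = (\<Sum>x\<in>V. (if x \<in> S then r else 1)) / moran_W V r S"
    by (simp add: w_def sum_divide_distrib)
  also have "(\<Sum>x\<in>V. (if x \<in> S then r else 1)) = r * real (card (V \<inter> S)) + real (card (V - S))"
    using finV by (simp add: sum.If_cases Diff_eq)
  also have "V \<inter> S = S" using assms by auto
  finally show ?thesis using W_pos[OF assms] by (simp add: moran_W_def)
qed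

lemma pmf_w: assumes "S \<subseteq> V" shows "pmf (embed_pmf (w S)) x = w S x"
proof (rule pmf_embed_pmf)
  show "\<And>x. 0 \<le> w S x" using w_nonneg[OF assms] .
  have "(\<integral>\<^sup>+x. ennreal (w S x) \<partial>count_space UNIV) = (\<Sum>x\<in>V. ennreal (w S x))"
    using finV by (intro nn_integral_count_space') (auto simp: w_def)
  also have "\<dots> = ennreal (\<Sum>x\<in>V. w S x)" using w_nonneg[OF assms] by (intro sum_ennreal) auto
  finally show "(\<integral>\<^sup>+x. ennreal (w S x) \<partial>count_space UNIV) = 1" using w_sum[OF assms] by simp
qed

lemma set_w: assumes "S \<subseteq> V" shows "set_pmf (embed_pmf (w S)) \<subseteq> V"
  using pmf_w[OF assms] by (auto simp: set_pmf_iff w_def split: if_splits)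

lemma h_sub: "S \<subseteq> V \<Longrightarrow> y \<in> N x \<Longrightarrow> h S x y \<subseteq> V"
  using NV by (auto simp: h_def)

lemma set_inner: assumes "S \<subseteq> V" "x \<in> V"
  shows "set_pmf (map_pmf (h S x) (pmf_of_set (N x))) \<subseteq> Pow V"
  using h_sub[OF assms(1)] Nne[OF assms(2)] finN by auto

lemma set_step: assumes "S \<subseteq> V" shows "set_pmf (moran_step V E r S) \<subseteq> Pow V"
  unfolding step_eq set_bind_pmf
proof (rule UN_least)
  fix x assume "x \<in> set_pmf (embed_pmf (w S))"
  then have "x \<in> V" using set_w[OF assms] by blast
  then show "set_pmf (map_pmf (h S x) (pmf_of_set (N x))) \<subseteq> Pow V" by (rule set_inner[OF assms])
qed

lemma step_exp: assumes "S \<subseteq> V"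
  shows "measure_pmf.expectation (moran_step V E r S) f =
     (\<Sum>x\<in>V. (\<Sum>y\<in>N x. f (h S x y)) / d x * w S x)"
proof -
  have "measure_pmf.expectation (moran_step V E r S) f =
     measure_pmf.expectation (embed_pmf (w S)) (\<lambda>x. measure_pmf.expectation (map_pmf (h S x) (pmf_of_set (N x))) f)"
    unfolding step_eq using finV set_w[OF assms] set_inner[OF assms]
    by (intro exp_bind_finite[where A=V and B="Pow V"]) auto
  also have "\<dots> = (\<Sum>x\<in>V. measure_pmf.expectation (map_pmf (h S x) (pmf_of_set (N x))) f * pmf (embed_pmf (w S)) x)"
    using finV set_w[OF assms] by (intro integral_measure_pmf_real) auto
  also have "\<dots> = (\<Sum>x\<in>V. (\<Sum>y\<in>N x. f (h S x y)) / d x * w S x)"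
    using Nne finN by (intro sum.cong refl) (simp add: pmf_w[OF assms] integral_pmf_of_set d_def)
  finally show ?thesis .
qed

lemma phi_h: assumes "S \<subseteq> V" "x \<in> V" "y \<in> V"
  shows "phi (h S x y) = phi S + delta S x y"
proof (cases "x \<in> S")
  case True
  then show ?thesis
  proof (cases "y \<in> S")
    case False
    have "insert y S \<inter> V = insert y (S \<inter> V)" using assms by auto
    then show ?thesis using True False finV assms by (simp add: phi_def h_def delta_def)
  qed (simp add: h_def delta_def insert_absorb)
next
  case False
  then show ?thesis
  proof (cases "y \<in> S")
    case True
    have "(S - {y}) \<inter> V = (S \<inter> V) - {y}" by auto
    then show ?thesis using True False finV assms by (simp add: phi_def h_def delta_def sum_diff1)
  qed (simp add: h_def delta_def)
qed

lemma N_filter: "N x = {y \<in> V. E x y}" using Ein by (auto simp: N_def)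

lemma exp_phi: assumes SV: "S \<subseteq> V"
  shows "measure_pmf.expectation (moran_step V E r S) phi = phi S + (r - 1) * Bs S"
proof -
  define T where "T x y = (if E x y then delta S x y * w S x / d x else 0)" for x y
  define P where "P x y = (if E x y \<and> x \<in> S \<and> y \<notin> S then r * c S x y else 0)" for x y
  define Q where "Q x y = (if E x y \<and> x \<notin> S \<and> y \<in> S then c S x y else 0)" for x y
  have inner: "(\<Sum>y\<in>N x. phi (h S x y)) / d x * w S x = phi S * w S x + (\<Sum>y\<in>V. T x y)"
    if x: "x \<in> V" for x
  proof -
    have "(\<Sum>y\<in>N x. phi (h S x y)) = (\<Sum>y\<in>N x. phi S + delta S x y)"
      using phi_h[OF SV x] NV by (intro sum.cong refl) auto
    also have "\<dots> = d x * phi S + (\<Sum>y\<in>N x. delta S x y)"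
      by (simp add: sum.distrib d_def)
    also have "(\<Sum>y\<in>N x. delta S x y) = (\<Sum>y\<in>V. if E x y then delta S x y else 0)"
      unfolding N_filter using finV by (rule sum.inter_filter)
    finally have "(\<Sum>y\<in>N x. phi (h S x y)) / d x * w S x
        = (d x * phi S + (\<Sum>y\<in>V. if E x y then delta S x y else 0)) / d x * w S x" by simp
    also have "\<dots> = phi S * w S x + (\<Sum>y\<in>V. if E x y then delta S x y else 0) * w S x / d x"
      using d_pos[OF x] by (simp add: field_simps)
    also have "(\<Sum>y\<in>V. if E x y then delta S x y else 0) * w S x / d x = (\<Sum>y\<in>V. T x y)"
      unfolding T_def sum_distrib_right sum_divide_distrib by (intro sum.cong refl) simp
    finally show ?thesis .
  qed
  have TPQ: "T x y = P x y - Q x y" if "x \<in> V" "y \<in> V" for x y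
    using that d_pos W_pos[OF SV]
    by (auto simp: T_def P_def Q_def delta_def w_def c_def field_simps)
  have sumP: "(\<Sum>x\<in>V. \<Sum>y\<in>V. P x y) = r * Bs S"
    unfolding P_def Bs_def by (simp add: sum_distrib_left if_distrib cong: if_cong)
  have sumQ: "(\<Sum>x\<in>V. \<Sum>y\<in>V. Q x y) = Bs S"
  proof -
    have "(\<Sum>x\<in>V. \<Sum>y\<in>V. Q x y) = (\<Sum>y\<in>V. \<Sum>x\<in>V. Q x y)" by (rule sum.swap)
    also have "\<dots> = Bs S" unfolding Bs_def Q_def
      by (intro sum.cong refl) (auto simp: c_def mult_ac dest: Esym)
    finally show ?thesis .
  qed
  have "measure_pmf.expectation (moran_step V E r S) phi = (\<Sum>x\<in>V. phi S * w S x + (\<Sum>y\<in>V. T x y))"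
    unfolding step_exp[OF SV] by (intro sum.cong refl inner)
  also have "\<dots> = phi S * (\<Sum>x\<in>V. w S x) + (\<Sum>x\<in>V. \<Sum>y\<in>V. P x y - Q x y)"
    by (simp add: sum.distrib sum_distrib_left TPQ)
  also have "\<dots> = phi S + (r - 1) * Bs S"
    using w_sum[OF SV] sumP sumQ by (simp add: sum_subtractf algebra_simps)
  finally show ?thesis .
qed

lemma c_pos: "S \<subseteq> V \<Longrightarrow> x \<in> V \<Longrightarrow> y \<in> V \<Longrightarrow> c S x y > 0"
  unfolding c_def using W_pos[of S] d_pos[of x] d_pos[of y] by simp

lemma Bs_nonneg: assumes "S \<subseteq> V" shows "Bs S \<ge> 0"
  unfolding Bs_def using c_pos[OF assms] by (intro sum_nonneg) (auto simp: less_imp_le)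

lemma boundary_aux: "E\<^sup>*\<^sup>* u v \<Longrightarrow> u \<in> S \<Longrightarrow> v \<notin> S \<Longrightarrow> \<exists>x y. E x y \<and> x \<in> S \<and> y \<notin> S"
proof (induction rule: rtranclp_induct)
  case base then show ?case by simp
next
  case (step a b)
  then show ?case by (cases "a \<in> S") auto
qed

lemma boundary: assumes "S \<subseteq> V" "S \<noteq> {}" "S \<noteq> V"
  shows "\<exists>x y. E x y \<and> x \<in> S \<and> y \<notin> S"
proof -
  obtain u where u: "u \<in> S" using assms by blast
  obtain v where v: "v \<in> V" "v \<notin> S" using assms by blast
  have "E\<^sup>*\<^sup>* u v" using Econn u v assms(1) by blast
  then show ?thesis using boundary_aux u v by blast
qed

lemma Bs_lower: assumes SV: "S \<subseteq> V" "S \<noteq> {}" "S \<noteq> V"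
  shows "Bs S \<ge> 1 / real (card V) ^ 3"
proof -
  obtain x y where xy: "E x y" "x \<in> S" "y \<notin> S" using boundary[OF SV] by blast
  have xV: "x \<in> V" and yV: "y \<in> V" using Ein[OF xy(1)] by auto
  let ?f = "\<lambda>x y. if E x y \<and> x \<in> S \<and> y \<notin> S then c S x y else 0"
  have nn: "\<And>a b. a \<in> V \<Longrightarrow> b \<in> V \<Longrightarrow> ?f a b \<ge> 0" using c_pos[OF SV(1)] by (auto simp: less_imp_le)
  have "c S x y = ?f x y" using xy by simp
  also have "\<dots> \<le> (\<Sum>b\<in>V. ?f x b)"
    using finV yV nn xV by (intro member_le_sum) auto
  also have "\<dots> \<le> (\<Sum>a\<in>V. \<Sum>b\<in>V. ?f a b)"
    using finV xV nn by (intro member_le_sum sum_nonneg) auto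
  finally have 1: "c S x y \<le> Bs S" unfolding Bs_def .
  have Wp: "0 < moran_W V r S" using W_pos[OF SV(1)] .
  have "moran_W V r S * d x * d y \<le> real (card V) * real (card V) * real (card V)"
    using W_bounds(2)[OF SV(1)] d_le[of x] d_le[of y] Wp d_pos[OF xV] d_pos[OF yV]
    by (intro mult_mono) auto
  moreover have "0 < moran_W V r S * d x * d y" using Wp d_pos[OF xV] d_pos[OF yV] by simp
  ultimately have P: "0 < moran_W V r S * d x * d y" "moran_W V r S * d x * d y \<le> real (card V) ^ 3"
    by (simp_all add: power3_eq_cube)
  have n3: "0 < real (card V) ^ 3 * (moran_W V r S * d x * d y)"
  proof -
    have "0 < real (card V) ^ 3" using P by linarith
    then show ?thesis using P(1) by (rule mult_pos_pos)
  qed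
  have "1 / real (card V) ^ 3 \<le> c S x y" unfolding c_def
    using divide_left_mono[OF P(2) _ n3, of 1] by simp
  with 1 show ?thesis by linarith
qed

definition NA where "NA = {S. S \<noteq> {} \<and> S \<noteq> V}"
definition k where "k = (1 - r) / real (card V) ^ 3"

lemma k_pos: "k > 0" using r1 n2 by (simp add: k_def)

lemma drift: assumes SV: "S \<subseteq> V"
  shows "measure_pmf.expectation (moran_step V E r S) phi \<le> phi S - k * indicator NA S"
proof (cases "S \<in> NA")
  case True
  then have B: "Bs S \<ge> 1 / real (card V) ^ 3" using Bs_lower[OF SV] by (simp add: NA_def)
  have "measure_pmf.expectation (moran_step V E r S) phi = phi S + (r - 1) * Bs S"
    by (rule exp_phi[OF SV])
  also have "\<dots> \<le> phi S + (r - 1) * (1 / real (card V) ^ 3)"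
    using r1 B by (intro add_left_mono mult_left_mono_neg) auto
  also have "(r - 1) * (1 / real (card V) ^ 3) = - k"
    unfolding k_def by (simp add: minus_divide_left)
  also have "phi S + - k = phi S - k * indicator NA S" using True by simp
  finally show ?thesis .
next
  case False
  have "(r - 1) * Bs S \<le> 0" using Bs_nonneg[OF SV] r1 by (simp add: mult_nonneg_nonpos2 mult_le_0_iff)
  then show ?thesis using False exp_phi[OF SV] by simp
qed

lemma main: assumes x0: "x0 \<in> V"
  shows "moran_expected_absorption_time V E r x0 \<le> ennreal (real (card V) ^ 3 / (1 - r))"
proof -
  define p where "p i = moran_dist V E r x0 i" for i
  define a where "a i = measure_pmf.expectation (p i) phi" for i
  define q where "q i = measure_pmf.prob (p i) NA" for i
  have pSuc: "p (Suc i) = bind_pmf (p i) (moran_step V E r)" for i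
    by (simp add: p_def moran_dist_def)
  have psub: "set_pmf (p i) \<subseteq> Pow V" for i
  proof (induction i)
    case 0 then show ?case using x0 by (simp add: p_def moran_dist_def)
  next
    case (Suc i)
    show ?case unfolding pSuc set_bind_pmf
    proof (rule UN_least)
      fix S assume "S \<in> set_pmf (p i)"
      then have "S \<subseteq> V" using Suc by blast
      then show "set_pmf (moran_step V E r S) \<subseteq> Pow V" by (rule set_step)
    qed
  qed
  have finP: "finite (Pow V)" using finV by simp
  have a_sum: "a i = (\<Sum>S\<in>Pow V. phi S * pmf (p i) S)" for i
    unfolding a_def using finP psub[of i] by (intro integral_measure_pmf_real) auto
  have q_sum: "q i = (\<Sum>S\<in>Pow V. indicator NA S * pmf (p i) S)" for i
  proof -
    have "q i = measure_pmf.expectation (p i) (indicator NA)" unfolding q_def by simp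
    also have "\<dots> = (\<Sum>S\<in>Pow V. indicator NA S * pmf (p i) S)"
      using finP psub[of i] by (intro integral_measure_pmf_real) auto
    finally show ?thesis .
  qed
  have step: "a (Suc i) \<le> a i - k * q i" for i
  proof -
    have "a (Suc i) = measure_pmf.expectation (p i) (\<lambda>S. measure_pmf.expectation (moran_step V E r S) phi)"
      unfolding a_def pSuc using finP psub[of i] set_step
      by (intro exp_bind_finite[where A="Pow V" and B="Pow V"]) auto
    also have "\<dots> = (\<Sum>S\<in>Pow V. measure_pmf.expectation (moran_step V E r S) phi * pmf (p i) S)"
      using finP psub[of i] by (intro integral_measure_pmf_real) auto
    also have "\<dots> \<le> (\<Sum>S\<in>Pow V. (phi S - k * indicator NA S) * pmf (p i) S)"
      using drift by (intro sum_mono mult_right_mono) (auto simp: pmf_nonneg)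
    also have "\<dots> = a i - k * q i"
      unfolding a_sum q_sum by (simp add: algebra_simps sum_subtractf sum_distrib_left)
    finally show ?thesis .
  qed
  have tele: "k * (\<Sum>i<M. q i) + a M \<le> a 0" for M
  proof (induction M)
    case 0 then show ?case by simp
  next
    case (Suc M) then show ?case using step[of M] by (simp add: algebra_simps)
  qed
  have a0: "a 0 \<le> 1"
  proof -
    have "a 0 = (\<Sum>S\<in>{{x0}}. phi S * pmf (p 0) S)"
      unfolding a_def by (intro integral_measure_pmf_real) (auto simp: p_def moran_dist_def)
    also have "\<dots> = 1 / d x0" using x0 by (simp add: p_def moran_dist_def phi_def)
    also have "\<dots> \<le> 1" using d_ge1[OF x0] by simp
    finally show ?thesis .
  qed
  have aN: "a M \<ge> 0" for M unfolding a_def by (intro integral_nonneg_AE AE_I2 phi_nonneg)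
  have qn: "q i \<ge> 0" for i unfolding q_def by simp
  have bound: "(\<Sum>i<M. q i) \<le> real (card V) ^ 3 / (1 - r)" for M
  proof -
    have "k * (\<Sum>i<M. q i) \<le> 1" using tele[of M] a0 aN[of M] by linarith
    then have "(\<Sum>i<M. q i) \<le> 1 / k" using k_pos by (simp add: field_simps)
    then show ?thesis using r1 by (simp add: k_def)
  qed
  have "moran_expected_absorption_time V E r x0 = (\<Sum>i. ennreal (q i))"
    unfolding moran_expected_absorption_time_def q_def p_def NA_def ..
  also have "\<dots> \<le> ennreal (real (card V) ^ 3 / (1 - r))"
  proof (rule suminf_le_const[OF summableI])
    fix M
    have "(\<Sum>i<M. ennreal (q i)) = ennreal (\<Sum>i<M. q i)" using qn by (intro sum_ennreal) auto
    then show "(\<Sum>i<M. ennreal (q i)) \<le> ennreal (real (card V) ^ 3 / (1 - r))"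
      using bound[of M] by (simp add: ennreal_leI)
  qed
  finally show ?thesis .
qed

end

theorem theorem5:
  fixes V :: "'a set" and E :: "'a \<Rightarrow> 'a \<Rightarrow> bool" and r :: real and x0 :: 'a
  assumes "connected_graph V E"
    and "card V \<ge> 2"
    and "0 < r" and "r < 1"
    and "x0 \<in> V"
  shows "moran_expected_absorption_time V E r x0
           \<le> ennreal (real (card V) ^ 3 / (1 - r))"
proof -
  interpret moran_graph V E r using assms by unfold_locales auto
  show ?thesis using main[OF assms(5)] .
qed

end
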